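(* For every positive integer $k$, the binary word $w_k=a^kba^kba^{2k}$ (of length $4k+2$) contains exactly $k+\left(\lfloor k/2\rfloor+1\right)^2+(k+1)\lceil k/2\rceil$ distinct abelian squares as factors. Consequently, the maximum number of distinct abelian square factors of a binary word of length $4k+2$ is at least $k+\left(\lfloor k/2\rfloor+1\right)^2+(k+1)\lceil k/2\rceil$.
   Context: For a word $u$ over $\{a,b\}$ and a letter $c$, $|u|_c$ is the number of occurrences of $c$ in $u$, and the Parikh vector of $u$ is $\mathcal{P}(u)=[|u|_a,|u|_b]$. A nonempty word $uv$ is an abelian square if $\mathcal{P}(u)=\mathcal{P}(v)$ (so $|u|=|v|\ge 1$). The number of distinct abelian squares in $w$ is the number of distinct words (as strings) that occur as factors (contiguous subwords) of $w$ and are abelian squares. $a^m$ denotes $m$ consecutive copies of the letter $a$. *)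

theory Defs
  imports Main
begin

datatype letter = a | b

definition parikh :: "letter list \<Rightarrow> nat \<times> nat" where
  "parikh u = (count_list u a, count_list u b)"

definition abelian_square :: "letter list \<Rightarrow> bool" where
  "abelian_square w \<longleftrightarrow> (\<exists>u v. w = u @ v \<and> u \<noteq> [] \<and> parikh u = parikh v)"

definition factors :: "letter list \<Rightarrow> letter list set" where
  "factors w = {u. \<exists>p s. w = p @ u @ s}"

definition num_abelian_squares :: "letter list \<Rightarrow> nat" where
  "num_abelian_squares w = card {u \<in> factors w. abelian_square u}"

definition max_abelian_squares :: "nat \<Rightarrow> nat" where
  "max_abelian_squares n = Max (num_abelian_squares ` {w. length w = n})"

definition wk :: "nat \<Rightarrow> letter list" where
  "wk k = replicate k a @ [b] @ replicate k a @ [b] @ replicate (2*k) a"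

end

theory Submission
  imports Defs
begin

lemma len_count: "length (x::letter list) = count_list x a + count_list x b"
proof (induction x)
  case Nil then show ?case by simp
next
  case (Cons c x) then show ?case by (cases c) auto
qed

lemma count_b0: "count_list (x::letter list) b = 0 \<Longrightarrow> x = replicate (length x) a"
proof (induction x)
  case Nil then show ?case by simp
next
  case (Cons c x) then show ?case by (cases c) (auto split: if_splits)
qed

lemma factor_split:
  assumes "p @ u @ s = xs @ c # ys" "c \<notin> set u"
  shows "(\<exists>p' s'. xs = p'@u@s') \<or> (\<exists>p' s'. ys = p'@u@s')"
proof -
  from assms(1) obtain us where
    h: "(p = xs @ us \<and> us @ u @ s = c # ys) \<or> (p @ us = xs \<and> u @ s = us @ c # ys)"
    using append_eq_append_conv2[of p "u@s" xs "c#ys"] by blast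
  then show ?thesis
  proof
    assume H: "p = xs @ us \<and> us @ u @ s = c # ys"
    show ?thesis
    proof (cases us)
      case Nil
      then have "u @ s = c # ys" using H by simp
      then show ?thesis using assms(2)
        by (cases u) auto
    next
      case (Cons d us')
      then have "ys = us' @ u @ s" using H by simp
      then show ?thesis by blast
    qed
  next
    assume H: "p @ us = xs \<and> u @ s = us @ c # ys"
    then obtain zs where
      h2: "(u = us @ zs \<and> zs @ s = c # ys) \<or> (u @ zs = us \<and> s = zs @ c # ys)"
      using append_eq_append_conv2[of u s us "c#ys"] by blast
    then show ?thesis
    proof
      assume H2: "u = us @ zs \<and> zs @ s = c # ys"
      show ?thesis
      proof (cases zs)
        case Nil
        then have "u = us" using H2 by simp
        then show ?thesis using H by blast
      next
        case (Cons d zs')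
        then have "c \<in> set u" using H2 by auto
        then show ?thesis using assms(2) by simp
      qed
    next
      assume H2: "u @ zs = us \<and> s = zs @ c # ys"
      then show ?thesis using H by blast
    qed
  qed
qed

lemma factor_rep:
  assumes "p @ u @ s = replicate m a"
  shows "length u \<le> m"
  using arg_cong[OF assms, of length] by simp

definition S0 :: "nat \<Rightarrow> letter list set" where
  "S0 k = (\<lambda>m. replicate (2*m) a) ` {1..k}"
definition Q :: "nat \<Rightarrow> (nat \<times> nat) set" where
  "Q k = {(i,j). i \<le> k \<and> j \<le> i + k \<and> even (i+j+k)}"
definition g :: "nat \<Rightarrow> nat \<times> nat \<Rightarrow> letter list" where
  "g k = (\<lambda>(i,j). replicate i a @ b # replicate k a @ b # replicate j a)"

lemma count_rep[simp]: "count_list (replicate n x) y = (if x = y then n else 0)"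
  by (induction n) auto

lemma wk_split:
  assumes "i \<le> k" "j \<le> 2*k"
  shows "wk k = replicate (k-i) a @ g k (i,j) @ replicate (2*k-j) a"
proof -
  have 1: "replicate k a = replicate (k-i) a @ replicate i (a::letter)"
    using assms by (simp flip: replicate_add)
  have 2: "replicate (2*k) a = replicate j a @ replicate (2*k-j) (a::letter)"
    using assms by (simp flip: replicate_add)
  show ?thesis unfolding wk_def g_def
    by (subst 2, subst 1) simp
qed

lemma S2_sub:
  assumes "(i,j) \<in> Q k"
  shows "g k (i,j) \<in> factors (wk k) \<and> abelian_square (g k (i,j))"
proof
  from assms have ik: "i \<le> k" "j \<le> i + k" "even (i+j+k)" by (auto simp: Q_def)
  show "g k (i,j) \<in> factors (wk k)"
    using wk_split[of i k j] ik unfolding factors_def by auto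
  define h where "h = (j+k-i) div 2"
  have hk: "h \<le> k" "i + 2*h = k + j" using ik unfolding h_def by auto presburger+
  have "g k (i,j) = (replicate i a @ b # replicate h a) @ (replicate (k-h) a @ b # replicate j a)"
  proof -
    have "replicate k a = replicate h a @ replicate (k-h) (a::letter)"
      using hk by (simp flip: replicate_add)
    then show ?thesis unfolding g_def by simp
  qed
  moreover have "parikh (replicate i a @ b # replicate h a) = parikh (replicate (k-h) a @ b # replicate j a)"
    unfolding parikh_def using hk by simp
  ultimately show "abelian_square (g k (i,j))" unfolding abelian_square_def by blast
qed

lemma S0_sub:
  assumes "m \<in> {1..k}"
  shows "replicate (2*m) a \<in> factors (wk k) \<and> abelian_square (replicate (2*m) a)"
proof
  have "replicate (2*k) a = replicate (2*m) a @ replicate (2*k-2*m) (a::letter)"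
    using assms by (simp flip: replicate_add)
  then show "replicate (2*m) a \<in> factors (wk k)"
    unfolding factors_def wk_def by (intro CollectI exI[of _ "replicate k a @ [b] @ replicate k a @ [b]"] exI[of _ "replicate (2*k-2*m) a"]) auto
  have "replicate (2*m) a = replicate m a @ replicate m (a::letter)"
    by (simp flip: replicate_add)
  then show "abelian_square (replicate (2*m) a)"
    unfolding abelian_square_def parikh_def using assms by (intro exI[of _ "replicate m a"]) auto
qed

lemma nth_a: "b \<notin> set s \<Longrightarrow> n < length s \<Longrightarrow> s ! n = a"
  by (metis nth_mem letter.exhaust)

lemma sub_main:
  assumes w: "wk k = p @ u @ s" and sq: "abelian_square u"
  shows "u \<in> S0 k \<union> g k ` Q k"
proof -
  obtain x y where u: "u = x @ y" and xne: "x \<noteq> []" and pxy: "parikh x = parikh y"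
    using sq unfolding abelian_square_def by blast
  have ca: "count_list x a = count_list y a" and cb: "count_list x b = count_list y b"
    using pxy unfolding parikh_def by auto
  have lxy: "length x = length y" using ca cb len_count[of x] len_count[of y] by simp
  have "count_list (wk k) b = 2" unfolding wk_def by simp
  then have cnt: "count_list p b + 2 * count_list x b + count_list s b = 2"
    using w u cb by simp
  have lw: "length (wk k) = 4*k+2" unfolding wk_def by simp
  show ?thesis
  proof (cases "count_list x b = 0")
    case True
    then have "count_list u b = 0" using u cb by simp
    then have bu: "b \<notin> set u" by (simp add: count_list_0_iff)
    have "wk k = replicate k a @ b # (replicate k a @ b # replicate (2*k) a)"
      unfolding wk_def by simp
    then have "(\<exists>p' s'. replicate k a = p'@u@s') \<or> (\<exists>p' s'. replicate k a @ b # replicate (2*k) a = p'@u@s')"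
      using factor_split[OF _ bu] w by simp
    then have "length u \<le> 2*k"
    proof
      assume "\<exists>p' s'. replicate k a = p'@u@s'"
      then obtain p' s' where "replicate k a = p'@u@s'" by blast
      from factor_rep[OF this[symmetric]] show ?thesis by simp
    next
      assume "\<exists>p' s'. replicate k a @ b # replicate (2*k) a = p'@u@s'"
      then obtain p' s' where "replicate k a @ b # replicate (2*k) a = p'@u@s'" by blast
      from factor_split[OF this[symmetric] bu]
      show ?thesis
      proof
        assume "\<exists>p' s'. replicate k a = p'@u@s'"
        then obtain p' s' where "replicate k a = p'@u@s'" by blast
        from factor_rep[OF this[symmetric]] show ?thesis by simp
      next
        assume "\<exists>p' s'. replicate (2*k) a = p'@u@s'"
        then obtain p' s' where "replicate (2*k) a = p'@u@s'" by blast
        from factor_rep[OF this[symmetric]] show ?thesis by simp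
      qed
    qed
    moreover have "u = replicate (length u) a"
      using count_b0[OF \<open>count_list u b = 0\<close>] .
    moreover have "length u = 2 * length x" using u lxy by simp
    moreover have "length x \<ge> 1" using xne by (cases x) auto
    ultimately have "u = replicate (2 * length x) a" "length x \<in> {1..k}" by auto
    then have "u \<in> S0 k" unfolding S0_def by blast
    then show ?thesis by blast
  next
    case False
    have cx1: "count_list x b = 1" using cnt False by linarith
    have cp: "count_list p b = 0" using cnt cx1 by linarith
    have cs: "count_list s b = 0" using cnt cx1 by linarith
    have pr: "p = replicate (length p) a" using count_b0[OF cp] .
    have sr: "s = replicate (length s) a" using count_b0[OF cs] .
    have pk: "length p \<le> k"
    proof (rule ccontr)
      assume "\<not> length p \<le> k"
      then have "wk k ! k = p ! k" using w by (simp add: nth_append)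
      also have "\<dots> = a" using cp \<open>\<not> length p \<le> k\<close> by (intro nth_a) (auto simp: count_list_0_iff)
      finally show False unfolding wk_def by (simp add: nth_append)
    qed
    have sk: "length s \<le> 2*k"
    proof (rule ccontr)
      assume A: "\<not> length s \<le> 2*k"
      have L: "length (p @ u) + length s = 4*k+2" using w lw by simp
      have "wk k ! (2*k+1) = ((p @ u) @ s) ! (2*k+1)" using w by simp
      also have "\<dots> = s ! (2*k+1 - length (p@u))"
        using A L by (simp only: nth_append) auto
      also have "\<dots> = a" using A L cs by (intro nth_a) (auto simp: count_list_0_iff)
      finally show False unfolding wk_def by (simp add: nth_append)
    qed
    define i where "i = k - length p"
    define j where "j = 2*k - length s"
    have ij: "i \<le> k" "j \<le> 2*k" unfolding i_def j_def by auto
    have e1: "k - i = length p" "2*k - j = length s" using pk sk unfolding i_def j_def by auto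
    have "wk k = replicate (length p) a @ g k (i,j) @ replicate (length s) a"
      using wk_split[OF ij] e1 by simp
    also have "\<dots> = p @ g k (i,j) @ s" by (simp add: pr[symmetric] sr[symmetric])
    finally have "wk k = p @ g k (i,j) @ s" .
    then have ug: "u = g k (i,j)" using w by simp
    have lu: "length u = i + j + k + 2" unfolding ug g_def by simp
    have "length u = 2 * length y" using u lxy by simp
    then have ev: "even (i+j+k)" using lu by presburger
    have jy: "j < length y"
    proof (rule ccontr)
      assume A: "\<not> j < length y"
      have "replicate j a = replicate (j - length y) a @ replicate (length y) (a::letter)"
        using A by (simp flip: replicate_add)
      then have "x @ y = (replicate i a @ b # replicate k a @ b # replicate (j - length y) a) @ replicate (length y) a"
        using u ug unfolding g_def by simp
      then have "y = replicate (length y) a"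
        by (subst (asm) append_eq_append_conv) auto
      then have "count_list y b = 0" by (metis count_rep letter.distinct(1))
      then show False using cx1 cb by simp
    qed
    have "j \<le> i + k" using ev jy lu \<open>length u = 2 * length y\<close> by presburger
    then have "(i,j) \<in> Q k" unfolding Q_def using ij ev by auto
    then show ?thesis using ug by blast
  qed
qed

lemma char_set: "{u \<in> factors (wk k). abelian_square u} = S0 k \<union> g k ` Q k"
proof
  show "{u \<in> factors (wk k). abelian_square u} \<subseteq> S0 k \<union> g k ` Q k"
    using sub_main unfolding factors_def by blast
  show "S0 k \<union> g k ` Q k \<subseteq> {u \<in> factors (wk k). abelian_square u}"
    using S0_sub S2_sub unfolding S0_def by auto
qed

lemma g_tw: "takeWhile (\<lambda>c. c = a) (g k (i,j)) = replicate i a"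
  unfolding g_def by (induction i) auto

lemma g_inj: "inj_on (g k) X"
proof (rule inj_onI)
  fix x y assume "x \<in> X" "y \<in> X" "g k x = g k y"
  obtain i j where x: "x = (i,j)" by fastforce
  obtain i' j' where y: "y = (i',j')" by fastforce
  have "replicate i a = replicate i' a" using g_tw[of k i j] g_tw[of k i' j'] \<open>g k x = g k y\<close> x y by simp
  then have "i = i'" by (metis length_replicate)
  moreover have "length (g k (i,j)) = length (g k (i',j'))" using \<open>g k x = g k y\<close> x y by simp
  then have "i + j = i' + j'" unfolding g_def by simp
  ultimately show "x = y" using x y by simp
qed

lemma S0_card: "card (S0 k) = k"
proof -
  have "inj_on (\<lambda>m. replicate (2*m) a) {1..k}"
    by (rule inj_onI) (metis length_replicate mult_left_cancel zero_neq_numeral)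
  then show ?thesis unfolding S0_def by (simp add: card_image)
qed

lemma disj: "S0 k \<inter> g k ` Q k = {}"
proof -
  have "\<And>u. u \<in> S0 k \<Longrightarrow> count_list u b = 0" unfolding S0_def by auto
  moreover have "\<And>u. u \<in> g k ` Q k \<Longrightarrow> count_list u b = 2" unfolding g_def by auto
  ultimately show ?thesis by fastforce
qed

lemma card_par: "card {j. j \<le> n \<and> even (n+j)} = n div 2 + 1"
proof (induction n rule: less_induct)
  case (less n)
  show ?case
  proof (cases "n < 2")
    case True
    then have "n = 0 \<or> n = 1" by auto
    then show ?thesis
    proof
      assume "n = 0"
      then have "{j. j \<le> n \<and> even (n+j)} = {0}" by auto
      then show ?thesis using \<open>n = 0\<close> by simp
    next
      assume "n = 1"
      then have "{j. j \<le> n \<and> even (n+j)} = {1}" by auto presburger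
      then show ?thesis using \<open>n = 1\<close> by simp
    qed
  next
    case False
    have "{j. j \<le> n \<and> even (n+j)} = insert n {j. j \<le> n-2 \<and> even (n-2+j)}"
      using False by auto presburger+
    moreover have "n \<notin> {j. j \<le> n-2 \<and> even (n-2+j)}" using False by auto
    moreover have "card {j. j \<le> n-2 \<and> even (n-2+j)} = (n-2) div 2 + 1"
      using less.IH[of "n-2"] False by simp
    ultimately show ?thesis using False by simp
  qed
qed

lemma Q_card: "card (Q k) = (\<Sum>i\<le>k. (i+k) div 2 + 1)"
proof -
  have "Q k = Sigma {..k} (\<lambda>i. {j. j \<le> i+k \<and> even (i+k+j)})"
    unfolding Q_def by (auto simp: add.commute add.left_commute)
  then have "card (Q k) = (\<Sum>i\<le>k. card {j. j \<le> i+k \<and> even (i+k+j)})"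
    by (simp add: card_SigmaI)
  then show ?thesis by (simp only: card_par)
qed

definition F :: "nat \<Rightarrow> nat" where "F N = (\<Sum>n<N. n div 2 + 1)"

lemma F_even: "F (2*m) = m*(m+1) \<and> F (2*m+1) = (m+1)^2"
proof (induction m)
  case 0 then show ?case by (simp add: F_def)
next
  case (Suc m)
  have e: "F (2*Suc m) = F (2*m+1) + (m + 1)" unfolding F_def by simp
  have o: "F (2*Suc m + 1) = F (2*Suc m) + (m + 2)" unfolding F_def by simp
  show ?case using Suc e o by (simp add: power2_eq_square algebra_simps)
qed

lemma sum_formula: "(\<Sum>i\<le>(k::nat). (i+k) div 2 + 1) = (k div 2 + 1)^2 + (k + 1) * ((k + 1) div 2)"
proof -
  have "(\<Sum>i\<le>k. (i+k) div 2 + 1) = (\<Sum>i=0..k. (i+k) div 2 + 1)"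
    by (simp add: atMost_atLeast0)
  also have "\<dots> = (\<Sum>n=0+k..k+k. n div 2 + 1)"
    by (rule sum.shift_bounds_cl_nat_ivl[symmetric])
  also have "\<dots> = (\<Sum>n\<in>{k..<2*k+1}. n div 2 + 1)"
    by (intro sum.cong) auto
  finally have 1: "(\<Sum>i\<le>k. (i+k) div 2 + 1) = (\<Sum>n\<in>{k..<2*k+1}. n div 2 + 1)" .
  have "F k + (\<Sum>n\<in>{k..<2*k+1}. n div 2 + 1) = F (2*k+1)"
    unfolding F_def lessThan_atLeast0 by (rule sum.atLeastLessThan_concat) auto
  moreover have "F (2*k+1) = (k+1)^2" using F_even by blast
  moreover have "F k + (k div 2 + 1)^2 + (k + 1) * ((k + 1) div 2) = (k+1)^2"
  proof (cases "even k")
    case True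
    then obtain m where k: "k = 2*m" by blast
    have "F k = m*(m+1)" using F_even k by blast
    then show ?thesis using k by (simp add: power2_eq_square algebra_simps)
  next
    case False
    then obtain m where k: "k = 2*m+1" using oddE by blast
    have "F k = (m+1)^2" using F_even k by blast
    moreover have "(k+1) div 2 = m+1" using k by simp
    ultimately show ?thesis using k by (simp add: power2_eq_square algebra_simps)
  qed
  ultimately show ?thesis using 1 by linarith
qed

lemma letter_UNIV: "(UNIV :: letter set) = {a, b}"
  using letter.exhaust by auto

lemma fin_words: "finite {w :: letter list. length w = n}"
proof -
  have "finite (UNIV :: letter set)" using letter_UNIV by (metis finite.emptyI finite_insert)
  then show ?thesis using finite_lists_length_eq[of "UNIV :: letter set" n] by simp
qed

theorem mainTheorem3:
  fixes k :: nat
  assumes "k \<ge> 1"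
  shows "length (wk k) = 4*k + 2
    \<and> num_abelian_squares (wk k) = k + (k div 2 + 1)^2 + (k + 1) * ((k + 1) div 2)
    \<and> max_abelian_squares (4*k + 2) \<ge> k + (k div 2 + 1)^2 + (k + 1) * ((k + 1) div 2)"
proof -
  have L: "length (wk k) = 4*k + 2" unfolding wk_def by simp
  have fin: "finite (g k ` Q k)"
  proof -
    have "Q k \<subseteq> {..k} \<times> {..2*k}" unfolding Q_def by auto
    then have "finite (Q k)" by (rule finite_subset) auto
    then show ?thesis by simp
  qed
  have fin0: "finite (S0 k)" unfolding S0_def by simp
  have N: "num_abelian_squares (wk k) = k + (k div 2 + 1)^2 + (k + 1) * ((k + 1) div 2)"
    unfolding num_abelian_squares_def char_set
    using card_Un_disjoint[OF fin0 fin disj] S0_card card_image[OF g_inj[of k "Q k"]] Q_card sum_formula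
    by simp
  have "num_abelian_squares (wk k) \<le> max_abelian_squares (4*k+2)"
    unfolding max_abelian_squares_def
    using fin_words L by (intro Max_ge) auto
  then show ?thesis using L N by simp
qed

end
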